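(* Let $s,t,q,N$ be integers with $0\le s<q$, $1\le t<q$, $N\ge0$, $t\nmid q$ and $\gcd(t,q)=g>1$. Put $\tilde t=t/g$, $\tilde q=q/g$, and write $s=\overline s g+s_g$ ($0\le s_g<g$), $\overline s=\overline{\overline s}\tilde t+\hat{\hat s}$ ($0\le\hat{\hat s}<\tilde t$), $\tilde q=\overline{\overline q}\tilde t+\hat{\hat q}$ ($1\le\hat{\hat q}<\tilde t$). Let $S^+(s,t,q,N)=\sum_{k=0}^N\lfloor(s+kt)/q\rfloor$, $M=\lfloor(s+Nt)/q\rfloor$, $x_M=(Mq-s)/t$, $S=\lfloor q/t\rfloor\frac{M(M-1)}2+M(N-\lceil x_M\rceil+1)$, $H=\{k\in\mathbb N:(\hat{\hat s}-k\hat{\hat q})\bmod\tilde t<\hat{\hat q}\}$, $J=H\cap\{0,\dots,\tilde t-1\}=\{j_0<\dots<j_{\hat{\hat q}-1}\}$, and $S_K=\sum_{k\in K}k$. Then: (a) if $j_0\ge M$, $S^+(s,t,q,N)=S$; (b.1) if $j_0<M\le j_{\hat{\hat q}-1}$, $S^+(s,t,q,N)=S+S_K$ with $K=H\cap\{0,\dots,M-1\}$; (b.2) if $j_{\hat{\hat q}-1}<M$ and $j_0+\tilde t\ge M$, $S^+(s,t,q,N)=S+S_J$; (b.3) if $j_{\hat{\hat q}-1}<M$ and $j_0+\tilde t<M$, with $u=\lfloor(M-1)/\tilde t\rfloor$ and $K=H\cap\{u\tilde t,\dots,M-1\}$, $S^+(s,t,q,N)=S+uS_J+\hat{\hat q}\,\tilde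 t\frac{(u-1)u}2+S_K$.
   Context: Here $r\bmod \tilde t$ denotes the representative of $r$ in $\{0,\dots,\tilde t-1\}$. *)

theory Defs
  imports Complex_Main
begin

definition Splus :: "int \<Rightarrow> int \<Rightarrow> int \<Rightarrow> int \<Rightarrow> int" where
  "Splus s t q N = (\<Sum>k\<in>{0..N}. (s + k * t) div q)"

definition SK :: "nat set \<Rightarrow> int" where
  "SK K = (\<Sum>k\<in>K. int k)"

end

theory Submission
  imports Defs
begin

lemma zle_div_iff: "0 < (q::int) \<Longrightarrow> (m \<le> n div q) = (m * q \<le> n)"
proof -
  assume q: "0 < q"
  have "n div q = \<lfloor>of_int n / (of_int q :: real)\<rfloor>" by (simp add: floor_divide_of_int_eq)
  hence "(m \<le> n div q) = (of_int m \<le> of_int n / (of_int q :: real))" by (simp add: le_floor_iff)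
  also have "\<dots> = (of_int m * of_int q \<le> (of_int n :: real))" using q by (simp add: pos_le_divide_eq)
  also have "\<dots> = (m * q \<le> n)" by (metis of_int_le_iff of_int_mult)
  finally show ?thesis .
qed

lemma divlem: "0 \<le> (R::int) \<Longrightarrow> R < tt \<Longrightarrow> (A * tt + R) div tt = A"
  by (simp add: div_pos_pos_trivial)

lemma div_diff_step:
  fixes x y tt :: int
  assumes "tt > 0"
  shows "x div tt - (x - y) div tt = y div tt + (if x mod tt < y mod tt then 1 else 0)"
proof -
  have x: "x = x div tt * tt + x mod tt" by simp
  have y: "y = y div tt * tt + y mod tt" by simp
  have r1: "0 \<le> x mod tt" "x mod tt < tt" "0 \<le> y mod tt" "y mod tt < tt" using assms by auto
  show ?thesis
  proof (cases "x mod tt < y mod tt")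
    case True
    have e: "x - y = (x div tt - y div tt - 1) * tt + (x mod tt - y mod tt + tt)"
      by (subst x, subst y) (simp add: algebra_simps)
    have "(x - y) div tt = ((x div tt - y div tt - 1) * tt + (x mod tt - y mod tt + tt)) div tt"
      using e by (rule arg_cong)
    also have "\<dots> = x div tt - y div tt - 1" by (rule divlem) (use r1 True assms in linarith)+
    finally have "(x - y) div tt = x div tt - y div tt - 1" .
    thus ?thesis using True by simp
  next
    case False
    have e: "x - y = (x div tt - y div tt) * tt + (x mod tt - y mod tt)"
      by (subst x, subst y) (simp add: algebra_simps)
    have "(x - y) div tt = ((x div tt - y div tt) * tt + (x mod tt - y mod tt)) div tt"
      using e by (rule arg_cong)
    also have "\<dots> = x div tt - y div tt" by (rule divlem) (use r1 False assms in linarith)+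
    finally have "(x - y) div tt = x div tt - y div tt" .
    thus ?thesis using False by simp
  qed
qed

lemma count_div:
  fixes x q :: int and M :: nat
  assumes "q > 0" "0 \<le> x" "x div q \<le> int M"
  shows "(\<Sum>m\<in>{1..M}. if int m * q \<le> x then 1 else 0 :: int) = x div q"
proof -
  have "(\<Sum>m\<in>{1..M}. if int m * q \<le> x then 1 else 0 :: int)
        = (\<Sum>m\<in>{m\<in>{1..M}. int m * q \<le> x}. 1)"
    by (simp add: sum.If_cases Int_def)
  also have "{m\<in>{1..M}. int m * q \<le> x} = {1..nat (x div q)}"
  proof (rule set_eqI)
    fix m
    have d0: "0 \<le> x div q" using assms by (simp add: pos_imp_zdiv_nonneg_iff)
    have a: "int m * q \<le> x \<longleftrightarrow> int m \<le> x div q"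
      using zle_div_iff[OF assms(1)] by metis
    have b: "m \<le> nat (x div q) \<longleftrightarrow> int m \<le> x div q" using d0 by linarith
    show "m \<in> {m\<in>{1..M}. int m * q \<le> x} \<longleftrightarrow> m \<in> {1..nat (x div q)}"
      using a b assms(3) by auto
  qed
  finally have "(\<Sum>m\<in>{1..M}. if int m * q \<le> x then 1 else 0 :: int) = int (nat (x div q))"
    by simp
  moreover have "0 \<le> x div q" using assms by (simp add: pos_imp_zdiv_nonneg_iff)
  ultimately show ?thesis by linarith
qed

lemma count_k:
  fixes N c :: int
  assumes "0 \<le> c" "c \<le> N + 1"
  shows "(\<Sum>k\<in>{0..N}. if c \<le> k then 1 else 0 :: int) = N + 1 - c"
proof -
  have "(\<Sum>k\<in>{0..N}. if c \<le> k then 1 else 0 :: int) = (\<Sum>k\<in>{k\<in>{0..N}. c \<le> k}. 1)"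
    by (rule sum.inter_filter[symmetric]) simp
  also have "{k\<in>{0..N}. c \<le> k} = {c..N}" using assms(1) by auto
  finally have "(\<Sum>k\<in>{0..N}. if c \<le> k then 1 else 0 :: int) = int (card {c..N})" by simp
  thus ?thesis using assms(2) by simp
qed

lemma splus_count:
  fixes s t q N :: int
  assumes "q > 0" "t > 0" "0 \<le> s" "s < q" "0 \<le> N"
  shows "Splus s t q N = (\<Sum>m\<in>{1..nat ((s + N*t) div q)}. N + 1 - (-((s - int m*q) div t)))"
proof -
  define M where "M = nat ((s + N*t) div q)"
  have "Splus s t q N = (\<Sum>k\<in>{0..N}. \<Sum>m\<in>{1..M}. if int m * q \<le> s + k*t then 1 else 0 :: int)"
    unfolding Splus_def
  proof (rule sum.cong)
    fix k assume k: "k \<in> {0..N}"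
    have "s + k*t \<le> s + N*t" using k assms by (simp add: mult_right_mono)
    hence "(s + k*t) div q \<le> (s + N*t) div q" using assms by (simp add: zdiv_mono1)
    moreover have "0 \<le> (s + N*t) div q" using assms by (simp add: pos_imp_zdiv_nonneg_iff)
    ultimately have "(s + k*t) div q \<le> int M" unfolding M_def by simp
    moreover have "0 \<le> s + k*t" using k assms by simp
    ultimately show "(s + k * t) div q = (\<Sum>m\<in>{1..M}. if int m * q \<le> s + k*t then 1 else 0 :: int)"
      using count_div[of q "s + k*t" M] assms by simp
  qed simp
  also have "\<dots> = (\<Sum>m\<in>{1..M}. \<Sum>k\<in>{0..N}. if int m * q \<le> s + k*t then 1 else 0 :: int)"
    by (rule sum.swap)
  also have "\<dots> = (\<Sum>m\<in>{1..M}. N + 1 - (-((s - int m*q) div t)))"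
  proof (rule sum.cong)
    fix m assume m: "m \<in> {1..M}"
    have iff: "\<And>k. int m * q \<le> s + k*t \<longleftrightarrow> -((s - int m*q) div t) \<le> k"
    proof -
      fix k
      have "-((s - int m*q) div t) \<le> k \<longleftrightarrow> -k \<le> (s - int m*q) div t" by linarith
      also have "\<dots> \<longleftrightarrow> -k * t \<le> s - int m * q" using assms by (simp add: zle_div_iff)
      also have "\<dots> \<longleftrightarrow> int m * q \<le> s + k*t" by (simp add: algebra_simps)
      finally show "int m * q \<le> s + k*t \<longleftrightarrow> -((s - int m*q) div t) \<le> k" by simp
    qed
    have "int m \<le> (s + N*t) div q" using m unfolding M_def by auto
    hence "int m * q \<le> s + N*t" using assms by (simp add: zle_div_iff)
    hence c1: "-((s - int m*q) div t) \<le> N" using iff by blast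
    have "s - int m * q < 0" using m assms
      by (smt (verit) mult_le_cancel_right1 of_nat_le_iff atLeastAtMost_iff of_nat_1)
    hence c0: "0 \<le> -((s - int m*q) div t)" using assms
      by (smt (verit) pos_imp_zdiv_neg_iff)
    show "(\<Sum>k\<in>{0..N}. if int m * q \<le> s + k*t then 1 else 0 :: int) = N + 1 - (-((s - int m*q) div t))"
    proof -
      have "(\<Sum>k\<in>{0..N}. if int m * q \<le> s + k*t then 1 else 0 :: int)
          = (\<Sum>k\<in>{0..N}. if -((s - int m*q) div t) \<le> k then 1 else 0 :: int)"
        by (simp only: iff)
      also have "\<dots> = N + 1 - (-((s - int m*q) div t))"
        by (rule count_k) (use c0 c1 in linarith)+
      finally show ?thesis .
    qed
  qed simp
  finally show ?thesis unfolding M_def .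
qed

lemma telescope:
  fixes c :: "nat \<Rightarrow> int"
  assumes "\<And>m. c (Suc m) - c m = a + (if m \<in> H then 1 else 0)"
  shows "2 * (\<Sum>m\<in>{1..n}. c n - c m) = a * (int n * (int n - 1)) + 2 * SK (H \<inter> {..<n})"
proof (induction n)
  case 0
  then show ?case by (simp add: SK_def)
next
  case (Suc n)
  have "(\<Sum>m\<in>{1..Suc n}. c (Suc n) - c m) = (\<Sum>m\<in>{1..n}. c (Suc n) - c m)"
    by (simp add: sum.cl_ivl_Suc)
  also have "\<dots> = (\<Sum>m\<in>{1..n}. (c n - c m) + (c (Suc n) - c n))"
    by simp
  also have "\<dots> = (\<Sum>m\<in>{1..n}. c n - c m) + int n * (a + (if n \<in> H then 1 else 0))"
    by (simp add: sum.distrib assms)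
  finally have e1: "(\<Sum>m\<in>{1..Suc n}. c (Suc n) - c m) = (\<Sum>m\<in>{1..n}. c n - c m) + int n * (a + (if n \<in> H then 1 else 0))" .
  have e2: "SK (H \<inter> {..<Suc n}) = SK (H \<inter> {..<n}) + (if n \<in> H then int n else 0)"
    unfolding SK_def by (simp add: lessThan_Suc Int_insert_right)
  define b :: int where "b = (if n \<in> H then 1 else 0)"
  have e2': "SK (H \<inter> {..<Suc n}) = SK (H \<inter> {..<n}) + b * int n" using e2 b_def by simp
  have "2 * (\<Sum>m\<in>{1..Suc n}. c (Suc n) - c m) = 2 * (\<Sum>m\<in>{1..n}. c n - c m) + 2 * int n * (a + b)"
    using e1 b_def by simp
  also have "\<dots> = a * (int n * (int n - 1)) + 2 * SK (H \<inter> {..<n}) + 2 * int n * (a + b)"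
    using Suc.IH by simp
  also have "\<dots> = a * (int (Suc n) * (int (Suc n) - 1)) + 2 * (SK (H \<inter> {..<n}) + b * int n)"
    by (simp add: algebra_simps of_nat_Suc)
  finally show ?case unfolding e2' .
qed

lemma half_prod: "2 * ((x::int) * (x - 1) div 2) = x * (x - 1)"
proof -
  have "even (x * (x - 1))" by simp
  thus ?thesis by simp
qed

lemma mod_lin: "((a::int) - m * b) mod c = (a mod c - m * (b mod c)) mod c"
  by (metis mod_diff_eq mod_mult_right_eq mod_mod_trivial)

lemma cancel2:
  fixes a b d x :: int
  assumes "2 * a = d * (x * (x - 1)) + 2 * b"
  shows "a = d * (x * (x - 1) div 2) + b"
proof -
  define X where "X = x * (x - 1) div 2"
  have X: "x * (x - 1) = 2 * X" unfolding X_def using half_prod[of x] by simp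
  have "2 * a = 2 * (d * X + b)" using assms X by (simp add: algebra_simps)
  thus ?thesis unfolding X_def by simp
qed

lemma card_J:
  fixes tt qhh shh :: int
  assumes "tt > 0" "coprime tt qhh" "0 \<le> qhh" "qhh \<le> tt"
  shows "card {k::nat. k < nat tt \<and> (shh - int k * qhh) mod tt < qhh} = nat qhh"
proof -
  define f where "f k = (shh - int k * qhh) mod tt" for k::nat
  define T where "T = {..<nat tt}"
  have inj: "inj_on f T"
  proof (rule inj_onI)
    fix a b assume a: "a \<in> T" and b: "b \<in> T" and e: "f a = f b"
    have "tt dvd (shh - int a*qhh) - (shh - int b*qhh)" using e unfolding f_def
      by (simp add: mod_eq_dvd_iff)
    hence "tt dvd (int b - int a) * qhh" by (simp add: algebra_simps)
    hence d: "tt dvd (int b - int a)" using assms(2) by (simp add: coprime_dvd_mult_left_iff)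
    have lt: "\<bar>int b - int a\<bar> < tt" using a b unfolding T_def by auto
    show "a = b"
    proof (rule ccontr)
      assume "a \<noteq> b"
      hence "int b - int a \<noteq> 0" by simp
      from dvd_imp_le_int[OF this d] lt assms(1) show False by simp
    qed
  qed
  have fr: "\<And>k. 0 \<le> f k \<and> f k < tt" unfolding f_def using assms(1) by simp
  have img: "f ` T = {0..<tt}"
  proof (rule card_subset_eq)
    show "finite {0..<tt}" by simp
    show "f ` T \<subseteq> {0..<tt}" using fr by auto
    show "card (f ` T) = card {0..<tt}" using card_image[OF inj] unfolding T_def by simp
  qed
  define J where "J = {k::nat. k < nat tt \<and> f k < qhh}"
  have JT: "J \<subseteq> T" unfolding J_def T_def by auto
  have fJ: "f ` J = {0..<qhh}"
  proof
    show "f ` J \<subseteq> {0..<qhh}" unfolding J_def using fr by auto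
    show "{0..<qhh} \<subseteq> f ` J"
    proof
      fix r assume r: "r \<in> {0..<qhh}"
      hence "r \<in> f ` T" using img assms(4) by auto
      then obtain k where k: "k \<in> T" "r = f k" by auto
      hence "k \<in> J" unfolding J_def T_def using r by auto
      thus "r \<in> f ` J" using k by auto
    qed
  qed
  have "card J = card (f ` J)" using card_image[OF inj_on_subset[OF inj JT]] by simp
  also have "\<dots> = nat qhh" using fJ by simp
  finally show ?thesis unfolding J_def f_def .
qed

lemma per_gen:
  fixes H :: "nat set"
  assumes per: "\<And>k. k + T \<in> H \<longleftrightarrow> k \<in> H"
  shows "k + u * T \<in> H \<longleftrightarrow> k \<in> H"
proof (induction u)
  case 0 then show ?case by simp
next
  case (Suc u)
  have "k + Suc u * T = (k + u * T) + T" by simp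
  then show ?case using per Suc by metis
qed

lemma block:
  fixes H :: "nat set" and T :: nat
  assumes per: "\<And>k. k + T \<in> H \<longleftrightarrow> k \<in> H"
  shows "2 * SK (H \<inter> {..<u*T}) = 2 * int u * SK (H \<inter> {..<T})
           + int (card (H \<inter> {..<T})) * int T * (int u * (int u - 1))"
proof (induction u)
  case 0 then show ?case by (simp add: SK_def)
next
  case (Suc u)
  define J where "J = H \<inter> {..<T}"
  have split: "H \<inter> {..<Suc u * T} = (H \<inter> {..<u*T}) \<union> ((\<lambda>k. k + u*T) ` J)"
  proof (rule set_eqI)
    fix x
    show "x \<in> H \<inter> {..<Suc u * T} \<longleftrightarrow> x \<in> (H \<inter> {..<u*T}) \<union> ((\<lambda>k. k + u*T) ` J)"
    proof
      assume x: "x \<in> H \<inter> {..<Suc u * T}"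
      show "x \<in> (H \<inter> {..<u*T}) \<union> ((\<lambda>k. k + u*T) ` J)"
      proof (cases "x < u * T")
        case True then show ?thesis using x by auto
      next
        case False
        define k where "k = x - u*T"
        have xk: "x = k + u*T" using False k_def by simp
        have "k \<in> H" using x xk per_gen[OF per, of k u] by simp
        moreover have "k < T" using x xk by simp
        ultimately have "k \<in> J" unfolding J_def by simp
        thus ?thesis using xk by blast
      qed
    next
      assume "x \<in> (H \<inter> {..<u*T}) \<union> ((\<lambda>k. k + u*T) ` J)"
      thus "x \<in> H \<inter> {..<Suc u * T}"
      proof
        assume "x \<in> H \<inter> {..<u*T}" thus ?thesis by auto
      next
        assume "x \<in> (\<lambda>k. k + u*T) ` J"
        then obtain k where k: "k \<in> J" "x = k + u*T" by auto
        thus ?thesis using per_gen[OF per, of k u] unfolding J_def by auto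
      qed
    qed
  qed
  have disj: "(H \<inter> {..<u*T}) \<inter> ((\<lambda>k. k + u*T) ` J) = {}" by auto
  have fin: "finite J" unfolding J_def by simp
  have "SK ((\<lambda>k. k + u*T) ` J) = (\<Sum>k\<in>J. int (k + u*T))"
    unfolding SK_def by (subst sum.reindex) (auto simp: inj_on_def)
  also have "\<dots> = SK J + int (card J) * int (u*T)"
    unfolding SK_def by (simp add: sum.distrib)
  finally have e: "SK ((\<lambda>k. k + u*T) ` J) = SK J + int (card J) * int (u*T)" .
  have "SK (H \<inter> {..<Suc u * T}) = SK (H \<inter> {..<u*T}) + SK ((\<lambda>k. k + u*T) ` J)"
    unfolding split SK_def by (rule sum.union_disjoint) (use disj fin in auto)
  hence "2 * SK (H \<inter> {..<Suc u * T}) = 2 * SK (H \<inter> {..<u*T}) + 2 * (SK J + int (card J) * int (u*T))"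
    using e by simp
  also have "\<dots> = 2 * int (Suc u) * SK J + int (card J) * int T * (int (Suc u) * (int (Suc u) - 1))"
    using Suc.IH unfolding J_def[symmetric] by (simp add: algebra_simps)
  finally show ?case unfolding J_def .
qed
theorem theorem10:
  fixes s t q N :: int
  assumes hs: "0 \<le> s" "s < q"
    and ht: "1 \<le> t" "t < q"
    and hN: "0 \<le> N"
    and hndvd: "\<not> t dvd q"
    and hg: "gcd t q > 1"
  defines "g \<equiv> gcd t q"
  defines "tt \<equiv> t div g"
  defines "qt \<equiv> q div g"
  defines "sbar \<equiv> s div g"
  defines "shh \<equiv> sbar mod tt"
  defines "qhh \<equiv> qt mod tt"
  defines "M \<equiv> (s + N * t) div q"
  defines "S \<equiv> \<lfloor>real_of_int q / real_of_int t\<rfloor> * (M * (M - 1) div 2)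
                 + M * (N - \<lceil>real_of_int (M * q - s) / real_of_int t\<rceil> + 1)"
  defines "H \<equiv> {k::nat. (shh - int k * qhh) mod tt < qhh}"
  defines "J \<equiv> H \<inter> {0..<nat tt}"
  defines "j0 \<equiv> Min J"
  defines "jlast \<equiv> Max J"
  shows
    "(int j0 \<ge> M \<longrightarrow> Splus s t q N = S)
   \<and> (int j0 < M \<and> M \<le> int jlast \<longrightarrow>
        Splus s t q N = S + SK (H \<inter> {k. int k \<le> M - 1}))
   \<and> (int jlast < M \<and> int j0 + tt \<ge> M \<longrightarrow> Splus s t q N = S + SK J)
   \<and> (int jlast < M \<and> int j0 + tt < M \<longrightarrow>
        (let u = (M - 1) div tt
         in Splus s t q N = S + u * SK J + qhh * tt * ((u - 1) * u div 2)
                            + SK (H \<inter> {k. u * tt \<le> int k \<and> int k \<le> M - 1})))"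
proof -
  have q0: "q > 0" "t > 0" using hs ht by linarith+
  have g1: "g > 1" using hg g_def by simp
  have gt: "t = g * tt" unfolding tt_def g_def by simp
  have gq: "q = g * qt" unfolding qt_def g_def by simp
  have tt0: "tt > 0" using q0 g1 gt by (smt (verit) zero_less_mult_iff)
  have cop0: "coprime tt qt" unfolding tt_def qt_def g_def
    using div_gcd_coprime[of t q] q0 by simp
  have cop: "coprime tt qhh" unfolding qhh_def using cop0 tt0 coprime_mod_right_iff by simp
  have qhh0: "0 \<le> qhh" "qhh < tt" unfolding qhh_def using tt0 by simp_all
  have qhhpos: "qhh > 0"
  proof (rule ccontr)
    assume "\<not> qhh > 0"
    hence "qt mod tt = 0" using qhh0 unfolding qhh_def by simp
    hence "tt dvd qt" by auto
    hence "g * tt dvd g * qt" by simp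
    thus False using hndvd gt gq by simp
  qed
  define T where "T = nat tt"
  have Tt: "int T = tt" unfolding T_def using tt0 by simp
  have JT: "J = H \<inter> {..<T}" unfolding J_def T_def by auto
  have finJ: "finite J" unfolding JT by simp
  have cardJ: "int (card J) = qhh"
  proof -
    have "J = {k::nat. k < nat tt \<and> (shh - int k * qhh) mod tt < qhh}"
      unfolding J_def H_def by auto
    thus ?thesis using card_J[OF tt0 cop qhh0(1)] qhh0 by simp
  qed
  have Jne: "J \<noteq> {}" using cardJ qhhpos by auto
  have j0J: "j0 \<in> J" unfolding j0_def using finJ Jne by simp
  have jlJ: "jlast \<in> J" unfolding jlast_def using finJ Jne by simp
  have j0T: "j0 < T" using j0J JT by auto
  have per: "\<And>k. k + T \<in> H \<longleftrightarrow> k \<in> H"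
  proof -
    fix k
    have "(shh - int (k + T) * qhh) mod tt = (shh - int k * qhh + (- qhh) * tt) mod tt"
      using Tt by (simp add: algebra_simps)
    also have "\<dots> = (shh - int k * qhh) mod tt" by (rule mod_mult_self1)
    finally show "k + T \<in> H \<longleftrightarrow> k \<in> H" unfolding H_def by simp
  qed
  define cc where "cc m = -((s - int m * q) div t)" for m :: nat
  have step: "\<And>m. cc (Suc m) - cc m = q div t + (if m \<in> H then 1 else 0)"
  proof -
    fix m
    have A: "(s - int m * q) div t = (sbar - int m * qt) div tt"
    proof -
      have e: "s - int m * q = s + (- (int m * qt)) * g" using gq by (simp add: algebra_simps)
      have "(s - int m * q) div g = sbar - int m * qt" unfolding sbar_def e
        using div_mult_self1[of g s "- (int m * qt)"] g1 by simp
      thus ?thesis using gt tt0 zdiv_zmult2_eq[of tt "s - int m * q" g] by simp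
    qed
    have B: "(s - int (Suc m) * q) div t = (sbar - int m * qt - qt) div tt"
    proof -
      have e: "s - int (Suc m) * q = s + (- (int m * qt) - qt) * g" using gq by (simp add: algebra_simps)
      have "(s - int (Suc m) * q) div g = sbar - int m * qt - qt" unfolding sbar_def e
        using div_mult_self1[of g s "- (int m * qt) - qt"] g1 by simp
      thus ?thesis using gt tt0 zdiv_zmult2_eq[of tt "s - int (Suc m) * q" g] by simp
    qed
    have C: "q div t = qt div tt" using gq gt g1 by simp
    have D: "(sbar - int m * qt) mod tt = (shh - int m * qhh) mod tt"
      unfolding shh_def qhh_def by (metis mod_lin mod_mod_trivial)
    have "cc (Suc m) - cc m = (sbar - int m * qt) div tt - (sbar - int m * qt - qt) div tt"
      unfolding cc_def using A B by simp
    also have "\<dots> = qt div tt + (if (sbar - int m * qt) mod tt < qt mod tt then 1 else 0)"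
      by (rule div_diff_step[OF tt0])
    finally show "cc (Suc m) - cc m = q div t + (if m \<in> H then 1 else 0)"
      using C D unfolding H_def qhh_def by simp
  qed
  have M0: "0 \<le> M" unfolding M_def using hs hN ht q0 by (simp add: pos_imp_zdiv_nonneg_iff)
  define Mn where "Mn = nat M"
  have Mn: "int Mn = M" unfolding Mn_def using M0 by simp
  have Sp: "Splus s t q N = S + SK (H \<inter> {..<Mn})"
  proof -
    have "Splus s t q N = (\<Sum>m\<in>{1..Mn}. N + 1 - cc m)"
      unfolding Mn_def M_def cc_def using splus_count[OF q0 hs(1) hs(2) hN] by simp
    also have "\<dots> = (\<Sum>m\<in>{1..Mn}. (N + 1 - cc Mn) + (cc Mn - cc m))"
      by (rule sum.cong) (simp_all add: algebra_simps)
    also have "\<dots> = int Mn * (N + 1 - cc Mn) + (\<Sum>m\<in>{1..Mn}. cc Mn - cc m)"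
      by (subst sum.distrib) simp
    finally have e1: "Splus s t q N = M * (N + 1 - cc Mn) + (\<Sum>m\<in>{1..Mn}. cc Mn - cc m)"
      using Mn by simp
    have "2 * (\<Sum>m\<in>{1..Mn}. cc Mn - cc m) = (q div t) * (M * (M - 1)) + 2 * SK (H \<inter> {..<Mn})"
      using telescope[of cc "q div t" H Mn, OF step] Mn by simp
    hence e2: "(\<Sum>m\<in>{1..Mn}. cc Mn - cc m) = (q div t) * (M * (M - 1) div 2) + SK (H \<inter> {..<Mn})"
      by (rule cancel2)
    have fl: "\<lfloor>real_of_int q / real_of_int t\<rfloor> = q div t" by (rule floor_divide_of_int_eq)
    have ce: "\<lceil>real_of_int (M * q - s) / real_of_int t\<rceil> = cc Mn"
      unfolding cc_def Mn ceiling_divide_eq_div minus_diff_eq ..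
    show ?thesis unfolding S_def fl ce using e1 e2 by (simp add: algebra_simps)
  qed
  have Hset: "H \<inter> {k. int k \<le> M - 1} = H \<inter> {..<Mn}" using Mn by auto
  have SKe: "SK {} = 0" unfolding SK_def by simp
  show ?thesis
  proof (intro conjI impI)
    assume a: "int j0 \<ge> M"
    have "H \<inter> {..<Mn} = {}"
    proof (rule ccontr)
      assume "H \<inter> {..<Mn} \<noteq> {}"
      then obtain k where k: "k \<in> H" "k < Mn" by auto
      hence "k < j0" using a Mn by linarith
      hence "k \<in> J" using k j0T JT by auto
      hence "j0 \<le> k" unfolding j0_def using finJ by simp
      thus False using \<open>k < j0\<close> by simp
    qed
    thus "Splus s t q N = S" using Sp SKe by simp
  next
    assume "int j0 < M \<and> M \<le> int jlast"
    thus "Splus s t q N = S + SK (H \<inter> {k. int k \<le> M - 1})" using Sp Hset by simp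
  next
    assume a: "int jlast < M \<and> M \<le> int j0 + tt"
    have "H \<inter> {..<Mn} = J"
    proof
      show "J \<subseteq> H \<inter> {..<Mn}"
      proof
        fix k assume k: "k \<in> J"
        hence "k \<le> jlast" unfolding jlast_def using finJ by simp
        thus "k \<in> H \<inter> {..<Mn}" using k a Mn JT by auto
      qed
      show "H \<inter> {..<Mn} \<subseteq> J"
      proof
        fix k assume k: "k \<in> H \<inter> {..<Mn}"
        show "k \<in> J"
        proof (cases "k < T")
          case True then show ?thesis using k JT by auto
        next
          case False
          define k' where "k' = k - T"
          have kk: "k = k' + T" using False k'_def by simp
          have "k' \<in> H" using k kk per by auto
          moreover have "int k' < int j0" using k kk a Mn Tt by auto
          ultimately have "k' \<in> J" using j0T JT by auto
          hence "j0 \<le> k'" unfolding j0_def using finJ by simp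
          thus ?thesis using \<open>int k' < int j0\<close> by simp
        qed
      qed
    qed
    thus "Splus s t q N = S + SK J" using Sp by simp
  next
    assume a: "int jlast < M \<and> int j0 + tt < M"
    define u where "u = (M - 1) div tt"
    have M1: "M \<ge> 1" using a tt0 by linarith
    have u0: "0 \<le> u" unfolding u_def using M1 tt0 by (simp add: pos_imp_zdiv_nonneg_iff)
    have utt: "u * tt \<le> M - 1" unfolding u_def using zle_div_iff[OF tt0] by blast
    define un where "un = nat u"
    have un: "int un = u" unfolding un_def using u0 by simp
    define K where "K = H \<inter> {k. u * tt \<le> int k \<and> int k \<le> M - 1}"
    have U: "H \<inter> {..<Mn} = (H \<inter> {..<un * T}) \<union> K"
    proof (rule set_eqI)
      fix k
      have "int (un * T) = u * tt" using un Tt by simp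
      hence lt: "k < un * T \<longleftrightarrow> int k < u * tt" by (metis of_nat_less_iff)
      have lt2: "k < Mn \<longleftrightarrow> int k \<le> M - 1" using Mn by linarith
      show "k \<in> H \<inter> {..<Mn} \<longleftrightarrow> k \<in> (H \<inter> {..<un * T}) \<union> K"
        unfolding K_def using lt lt2 utt by auto
    qed
    have D: "(H \<inter> {..<un * T}) \<inter> K = {}"
    proof -
      have "int (un * T) = u * tt" using un Tt by simp
      hence lt: "\<And>k. k < un * T \<longleftrightarrow> int k < u * tt" by (metis of_nat_less_iff)
      show ?thesis unfolding K_def using lt by force
    qed
    have finK: "finite K" unfolding K_def
      by (rule finite_subset[of _ "{..nat M}"]) auto
    have SU: "SK (H \<inter> {..<Mn}) = SK (H \<inter> {..<un * T}) + SK K"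
      unfolding U SK_def by (rule sum.union_disjoint) (use D finK in auto)
    have "2 * SK (H \<inter> {..<un * T}) = (qhh * tt) * (u * (u - 1)) + 2 * (u * SK J)"
      using block[OF per, of un] un Tt cardJ JT by simp
    hence "SK (H \<inter> {..<un * T}) = (qhh * tt) * (u * (u - 1) div 2) + u * SK J"
      by (rule cancel2)
    hence SB: "SK (H \<inter> {..<un * T}) = u * SK J + qhh * tt * ((u - 1) * u div 2)"
      by (simp add: mult.commute)
    show "let u = (M - 1) div tt
         in Splus s t q N = S + u * SK J + qhh * tt * ((u - 1) * u div 2)
                            + SK (H \<inter> {k. u * tt \<le> int k \<and> int k \<le> M - 1})"
      unfolding Let_def u_def[symmetric] K_def[symmetric] using Sp SU SB by simp
  qed
qed

end
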